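(* Let $t>1$ be an integer and $n$ sufficiently large. Among all $K_{t-1,t}$-saturated $n$ by $n$ bipartite graphs with minimum degree less than $t-1$, a graph $G$ has the minimum number of edges if and only if $G\in\mathcal{F}^n_{t-1,t}$ and $G$ has minimum degree $t-2$.
   Context: An $n$ by $n$ bipartite graph $G$ has two color classes $U,U'$ with $|U|=|U'|=n$. For $1\le s\le t$, such a $G$ is called $K_{s,t}$-saturated if $G$ contains no subgraph isomorphic to $K_{s,t}$ (with either side of $K_{s,t}$ lying in either class), but adding any missing edge $uu'$ with $u\in U$, $u'\in U'$ creates a subgraph isomorphic to $K_{s,t}$ (with either orientation). $\mathcal{F}^n_{s,t}$ denotes the family of $K_{s,t}$-free $n$ by $n$ bipartite graphs in which one of the color classes contains a set $S$ of $s-1$ vertices such that every vertex of $S$ is adjacent to all $n$ vertices of the other class, and every vertex of that same class not in $S$ has degree exactly $t-1$. (Each graph in $\mathcal{F}^n_{t-1,t}$ has exactly $(2t-3)n-(t-1)(t-2)$ edges.) *)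

theory Defs
  imports Main
begin

text \<open>An n by n bipartite graph: colour classes U = {0..<n} and U' = {0..<n} (two disjoint
copies); an edge u u' with u in U, u' in U' is the pair (u, u').\<close>

definition bigraph :: "nat \<Rightarrow> (nat \<times> nat) set \<Rightarrow> bool" where
  "bigraph n E \<longleftrightarrow> E \<subseteq> {..<n} \<times> {..<n}"

definition degL :: "(nat \<times> nat) set \<Rightarrow> nat \<Rightarrow> nat" where
  "degL E u = card {v. (u, v) \<in> E}"

definition degR :: "(nat \<times> nat) set \<Rightarrow> nat \<Rightarrow> nat" where
  "degR E v = card {u. (u, v) \<in> E}"

definition min_degree :: "nat \<Rightarrow> (nat \<times> nat) set \<Rightarrow> nat" where
  "min_degree n E = Min ((degL E ` {..<n}) \<union> (degR E ` {..<n}))"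

definition contains_K :: "nat \<Rightarrow> nat \<Rightarrow> nat \<Rightarrow> (nat \<times> nat) set \<Rightarrow> bool" where
  "contains_K s t n E \<longleftrightarrow> (\<exists>A B. A \<subseteq> {..<n} \<and> B \<subseteq> {..<n} \<and>
      ((card A = s \<and> card B = t) \<or> (card A = t \<and> card B = s)) \<and> A \<times> B \<subseteq> E)"

definition K_saturated :: "nat \<Rightarrow> nat \<Rightarrow> nat \<Rightarrow> (nat \<times> nat) set \<Rightarrow> bool" where
  "K_saturated s t n E \<longleftrightarrow> bigraph n E \<and> \<not> contains_K s t n E \<and>
     (\<forall>u<n. \<forall>v<n. (u, v) \<notin> E \<longrightarrow> contains_K s t n (insert (u, v) E))"

definition family_F :: "nat \<Rightarrow> nat \<Rightarrow> nat \<Rightarrow> (nat \<times> nat) set \<Rightarrow> bool" where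
  "family_F s t n E \<longleftrightarrow> bigraph n E \<and> \<not> contains_K s t n E \<and>
     ((\<exists>S. S \<subseteq> {..<n} \<and> card S = s - 1 \<and> (\<forall>u\<in>S. \<forall>v<n. (u, v) \<in> E) \<and>
           (\<forall>u\<in>{..<n} - S. degL E u = t - 1)) \<or>
      (\<exists>S. S \<subseteq> {..<n} \<and> card S = s - 1 \<and> (\<forall>v\<in>S. \<forall>u<n. (u, v) \<in> E) \<and>
           (\<forall>v\<in>{..<n} - S. degR E v = t - 1)))"

end

theory Submission
  imports Defs
begin

definition flip :: "(nat \<times> nat) set \<Rightarrow> (nat \<times> nat) set" where
  "flip E = {(v, u). (u, v) \<in> E}"

lemma flip_mem[simp]: "(a, b) \<in> flip E \<longleftrightarrow> (b, a) \<in> E"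
  by (simp add: flip_def)

lemma flip_flip[simp]: "flip (flip E) = E"
  by (auto simp: flip_def)

lemma bigraph_flip[simp]: "bigraph n (flip E) \<longleftrightarrow> bigraph n E"
  by (auto simp: bigraph_def flip_def)

lemma degL_flip[simp]: "degL (flip E) u = degR E u"
  by (simp add: degL_def degR_def)

lemma degR_flip[simp]: "degR (flip E) u = degL E u"
  by (simp add: degL_def degR_def)

lemma min_degree_flip[simp]: "min_degree n (flip E) = min_degree n E"
  by (simp add: min_degree_def Un_commute)

lemma times_sub_flip: "A \<times> B \<subseteq> flip E \<longleftrightarrow> B \<times> A \<subseteq> E"
  by auto

lemma contains_K_flip_imp: "contains_K s t n (flip E) \<Longrightarrow> contains_K s t n E"
proof -
  assume "contains_K s t n (flip E)"
  then obtain A B where "A \<subseteq> {..<n}" "B \<subseteq> {..<n}"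
    "(card A = s \<and> card B = t) \<or> (card A = t \<and> card B = s)" "A \<times> B \<subseteq> flip E"
    unfolding contains_K_def by blast
  then show ?thesis unfolding contains_K_def times_sub_flip
    by (intro exI[of _ B] exI[of _ A]) auto
qed

lemma contains_K_flip[simp]: "contains_K s t n (flip E) \<longleftrightarrow> contains_K s t n E"
  using contains_K_flip_imp[of s t n E] contains_K_flip_imp[of s t n "flip E"] by auto

lemma insert_flip: "insert (u, v) (flip E) = flip (insert (v, u) E)"
  by (auto simp: flip_def)

lemma K_saturated_flip_imp: "K_saturated s t n E \<Longrightarrow> K_saturated s t n (flip E)"
  unfolding K_saturated_def insert_flip contains_K_flip bigraph_flip by auto

lemma K_saturated_flip[simp]: "K_saturated s t n (flip E) \<longleftrightarrow> K_saturated s t n E"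
  using K_saturated_flip_imp[of s t n E] K_saturated_flip_imp[of s t n "flip E"] by auto

lemma family_F_flip_imp: "family_F s t n E \<Longrightarrow> family_F s t n (flip E)"
  unfolding family_F_def by auto

lemma family_F_flip[simp]: "family_F s t n (flip E) \<longleftrightarrow> family_F s t n E"
  using family_F_flip_imp[of s t n E] family_F_flip_imp[of s t n "flip E"] by auto

lemma flip_image: "flip E = prod.swap ` E"
proof (rule set_eqI)
  fix p :: "nat \<times> nat"
  obtain a b where "p = (a, b)" by (cases p)
  then show "p \<in> flip E \<longleftrightarrow> p \<in> prod.swap ` E" by simp
qed

lemma card_flip[simp]: "card (flip E) = card E"
  unfolding flip_image by (simp add: card_image)

lemma card_block_rows:
  assumes "finite X" "finite Y"
  shows "card (E \<inter> (X \<times> Y)) = (\<Sum>u\<in>X. card {v\<in>Y. (u, v) \<in> E})"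
proof -
  have "E \<inter> (X \<times> Y) = Sigma X (\<lambda>u. {v\<in>Y. (u, v) \<in> E})" by auto
  then show ?thesis using assms by (simp add: card_SigmaI)
qed

lemma card_block_cols:
  assumes "finite X" "finite Y"
  shows "card ((E::(nat\<times>nat) set) \<inter> (X \<times> Y)) = (\<Sum>v\<in>Y. card {u\<in>X. (u, v) \<in> E})"
proof -
  have "card (E \<inter> (X \<times> Y)) = card (flip E \<inter> (Y \<times> X))"
  proof -
    have "flip E \<inter> (Y \<times> X) = flip (E \<inter> (X \<times> Y))" by (auto simp: flip_def)
    then show ?thesis by simp
  qed
  also have "\<dots> = (\<Sum>v\<in>Y. card {u\<in>X. (u, v) \<in> E})"
    using card_block_rows[OF assms(2,1), of "flip E"] by simp
  finally show ?thesis .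
qed

lemma bigraph_fin: "bigraph n E \<Longrightarrow> finite E"
  unfolding bigraph_def by (rule finite_subset) auto

lemma card_E_degL:
  assumes "bigraph n E" shows "card E = (\<Sum>u<n. degL E u)"
proof -
  have "E = E \<inter> ({..<n} \<times> {..<n})" using assms by (auto simp: bigraph_def)
  moreover have "\<And>u. {v\<in>{..<n}. (u, v) \<in> E} = {v. (u,v) \<in> E}" using assms by (auto simp: bigraph_def)
  ultimately show ?thesis using card_block_rows[of "{..<n}" "{..<n}" E]
    by (simp add: degL_def)
qed

lemma card_E_degR:
  assumes "bigraph n E" shows "card E = (\<Sum>u<n. degR E u)"
  using card_E_degL[of n "flip E"] assms by simp

lemma NR_sub: "bigraph n E \<Longrightarrow> {u. (u, v) \<in> E} \<subseteq> {..<n}"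
  by (auto simp: bigraph_def)
lemma NL_sub: "bigraph n E \<Longrightarrow> {v. (u, v) \<in> E} \<subseteq> {..<n}"
  by (auto simp: bigraph_def)

lemma sat_get:
  assumes "K_saturated s t n E" "u < n" "v < n" "(u, v) \<notin> E"
  obtains A B where "A \<subseteq> {..<n}" "B \<subseteq> {..<n}"
    "(card A = s \<and> card B = t) \<or> (card A = t \<and> card B = s)" "A \<times> B \<subseteq> insert (u, v) E"
proof -
  have all: "\<forall>u<n. \<forall>v<n. (u, v) \<notin> E \<longrightarrow> contains_K s t n (insert (u, v) E)"
    using assms(1) by (simp add: K_saturated_def)
  have "contains_K s t n (insert (u, v) E)" using all assms(2,3,4) by simp
  then obtain A B where "A \<subseteq> {..<n} \<and> B \<subseteq> {..<n} \<and>
    ((card A = s \<and> card B = t) \<or> (card A = t \<and> card B = s)) \<and> A \<times> B \<subseteq> insert (u, v) E"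
    unfolding contains_K_def by (elim exE)
  then show ?thesis using that by blast
qed

lemma low:
  assumes sat: "K_saturated (k+1) (k+2) n E" and x: "x < n" "u < n" "(u, x) \<notin> E"
    and d: "degR E x \<le> k"
  shows "degR E x = k \<and> (\<exists>Q. Q \<subseteq> {..<n} \<and> card Q = k+1 \<and> x \<notin> Q \<and>
            insert u {a. (a, x) \<in> E} \<times> Q \<subseteq> E)"
proof -
  have big: "bigraph n E" and free: "\<not> contains_K (k+1) (k+2) n E"
    using sat by (auto simp: K_saturated_def)
  obtain A' B' where AB: "A' \<subseteq> {..<n}" "B' \<subseteq> {..<n}"
    "(card A' = k+1 \<and> card B' = k+2) \<or> (card A' = k+2 \<and> card B' = k+1)"
    "A' \<times> B' \<subseteq> insert (u, x) E"
    by (rule sat_get[OF sat x(2) x(1) x(3)])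
  have ux: "(u, x) \<in> A' \<times> B'"
  proof (rule ccontr)
    assume "(u, x) \<notin> A' \<times> B'"
    then have "A' \<times> B' \<subseteq> E" using AB(4) by blast
    then have "contains_K (k+1) (k+2) n E" using AB unfolding contains_K_def by blast
    then show False using free by simp
  qed
  let ?R = "{a. (a, x) \<in> E}"
  have finR: "finite ?R" using NR_sub[OF big] finite_subset by blast
  have uR: "u \<notin> ?R" using x by simp
  have sub: "A' \<subseteq> insert u ?R"
  proof
    fix a assume "a \<in> A'"
    then have "(a, x) \<in> insert (u, x) E" using AB(4) ux by blast
    then show "a \<in> insert u ?R" by auto
  qed
  have cR: "card (insert u ?R) = degR E x + 1" using finR uR by (simp add: degR_def)
  have "card A' \<le> card (insert u ?R)" using sub finR by (intro card_mono) auto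
  with cR d AB(3) have cA: "card A' = k+1" "card B' = k+2" and dk: "degR E x = k" by auto
  have eqA: "A' = insert u ?R"
    using sub cA cR dk finR by (intro card_subset_eq) auto
  define Q where "Q = B' - {x}"
  have finB: "finite B'" using AB(2) finite_subset by blast
  have "x \<in> B'" using ux by simp
  then have cQ: "card Q = k+1" using cA finB by (simp add: Q_def)
  have "insert u ?R \<times> Q \<subseteq> E" using AB(4) eqA by (auto simp: Q_def)
  then show ?thesis using dk cQ AB(2) by (intro conjI exI[of _ Q]) (auto simp: Q_def)
qed

lemma degR_ge:
  assumes sat: "K_saturated (k+1) (k+2) n E" and v: "v < n" and n: "k < n"
  shows "k \<le> degR E v"
proof (rule ccontr)
  assume "\<not> k \<le> degR E v"
  then have lt: "degR E v < k" by simp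
  have big: "bigraph n E" using sat by (simp add: K_saturated_def)
  have "{u. (u, v) \<in> E} \<noteq> {..<n}"
  proof
    assume "{u. (u, v) \<in> E} = {..<n}"
    then have "degR E v = n" by (simp add: degR_def)
    then show False using lt n by simp
  qed
  then obtain u where u: "u < n" "(u, v) \<notin> E" using NR_sub[OF big, of v] by auto
  from low[OF sat v u] lt show False by simp
qed

lemma degL_ge:
  assumes sat: "K_saturated (k+1) (k+2) n E" and v: "v < n" and n: "k < n"
  shows "k \<le> degL E v"
  using degR_ge[of k n "flip E" v] assms by simp


lemma sum_eq_lower:
  fixes f :: "'a \<Rightarrow> nat"
  assumes "finite S" "\<forall>i\<in>S. c \<le> f i" "sum f S \<le> card S * c"
  shows "\<forall>i\<in>S. f i = c"
proof (rule ccontr)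
  assume "\<not> (\<forall>i\<in>S. f i = c)"
  then obtain j where j: "j \<in> S" "c < f j" using assms(2) by force
  have "sum (\<lambda>_. c) S < sum f S"
    using assms(1,2) j by (intro sum_strict_mono_ex1) auto
  then show False using assms(3) by (simp add: mult.commute)
qed

lemma core:
  assumes sat: "K_saturated (k+1) (k+2) n E" and x: "x < n" "degR E x \<le> k"
    and n: "2*k+3 \<le> n"
  shows "k*n + (k+1)*(n-k) \<le> card E \<and>
         (card E = k*n + (k+1)*(n-k) \<longrightarrow> family_F (k+1) (k+2) n E)"
proof -
  have big: "bigraph n E" and free: "\<not> contains_K (k+1) (k+2) n E"
    using sat by (auto simp: K_saturated_def)
  have EU: "E \<subseteq> {..<n} \<times> {..<n}" using big by (simp add: bigraph_def)
  define U where "U = {..<n::nat}"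
  define A where "A = {a. (a, x) \<in> E}"
  have AU: "A \<subseteq> U" using NR_sub[OF big] by (simp add: A_def U_def)
  have finU: "finite U" by (simp add: U_def)
  have finA: "finite A" using AU finU finite_subset by blast
  have "A \<noteq> U"
  proof
    assume "A = U"
    then have "degR E x = n" by (simp add: A_def U_def degR_def)
    then show False using x n by simp
  qed
  then obtain u0 where u0: "u0 < n" "(u0, x) \<notin> E" using AU by (auto simp: A_def U_def)
  have cA: "card A = k" using low[OF sat x(1) u0 x(2)] by (simp add: A_def degR_def)
  have Qex: "\<exists>Q. Q \<subseteq> U \<and> card Q = k+1 \<and> insert u A \<times> Q \<subseteq> E" if "u \<in> U - A" for u
    using low[OF sat x(1), of u] that x(2) by (auto simp: A_def U_def)
  define C where "C = {v\<in>U. \<forall>a\<in>A. (a, v) \<in> E}"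
  define D where "D = U - C"
  have CU: "C \<subseteq> U" by (auto simp: C_def)
  have finC: "finite C" "finite D" using CU finU by (auto simp: D_def intro: finite_subset)
  have cCD: "card C + card D = n"
  proof -
    have f: "finite C" using CU finU finite_subset by blast
    have "card D = card U - card C" using CU f by (simp add: D_def card_Diff_subset)
    moreover have "card C \<le> card U" using CU finU by (simp add: card_mono)
    ultimately show ?thesis by (simp add: U_def)
  qed
  have rowC: "k+1 \<le> card {v\<in>C. (u, v) \<in> E}" if uUA: "u \<in> U - A" for u
  proof -
    obtain Q where Q: "Q \<subseteq> U" "card Q = k+1" "insert u A \<times> Q \<subseteq> E" using Qex[OF uUA] by blast
    have "Q \<subseteq> {v\<in>C. (u, v) \<in> E}" using Q by (auto simp: C_def)
    then show ?thesis using Q(2) finC by (metis (no_types, lifting) card_mono finite_subset mem_Collect_eq subsetI)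
  qed
  have colR: "{u\<in>U. (u, y) \<in> E} = {u. (u, y) \<in> E}" for y using EU by (auto simp: U_def)
  have colD: "k \<le> card {u\<in>U. (u, y) \<in> E}" if "y \<in> D" for y
  proof -
    have "y < n" using that by (simp add: D_def U_def)
    then have "k \<le> degR E y" using degR_ge[OF sat] n by simp
    then show ?thesis by (simp only: colR degR_def)
  qed
  have part: "E = (E \<inter> (A \<times> C)) \<union> (E \<inter> ((U - A) \<times> C)) \<union> (E \<inter> (U \<times> D))"
    using EU AU by (auto simp: D_def U_def)
  have finE: "finite E" using bigraph_fin[OF big] .
  have cE: "card E = card (E \<inter> (A \<times> C)) + card (E \<inter> ((U - A) \<times> C)) + card (E \<inter> (U \<times> D))"
  proof -
    have "card E = card ((E \<inter> (A \<times> C)) \<union> (E \<inter> ((U - A) \<times> C)) \<union> (E \<inter> (U \<times> D)))"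
      by (rule arg_cong[OF part])
    also have "\<dots> = card ((E \<inter> (A \<times> C)) \<union> (E \<inter> ((U - A) \<times> C))) + card (E \<inter> (U \<times> D))"
      using finE by (intro card_Un_disjoint) (auto simp: D_def)
    also have "card ((E \<inter> (A \<times> C)) \<union> (E \<inter> ((U - A) \<times> C))) =
       card (E \<inter> (A \<times> C)) + card (E \<inter> ((U - A) \<times> C))"
      using finE by (intro card_Un_disjoint) auto
    finally show ?thesis .
  qed
  have c1: "card (E \<inter> (A \<times> C)) = k * card C"
  proof -
    have "E \<inter> (A \<times> C) = A \<times> C" by (auto simp: C_def)
    then show ?thesis using cA by (simp add: card_cartesian_product)
  qed
  have c2: "card (E \<inter> ((U - A) \<times> C)) = (\<Sum>u\<in>U - A. card {v\<in>C. (u, v) \<in> E})"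
    using finU finC by (intro card_block_rows) auto
  have c3: "card (E \<inter> (U \<times> D)) = (\<Sum>y\<in>D. card {u\<in>U. (u, y) \<in> E})"
    using finU finC by (intro card_block_cols) auto
  have cUA: "card (U - A) = n - k" using AU cA finA by (simp add: card_Diff_subset U_def)
  define X2 where "X2 = (\<Sum>u\<in>U - A. card {v\<in>C. (u, v) \<in> E})"
  define X3 where "X3 = (\<Sum>y\<in>D. card {u\<in>U. (u, y) \<in> E})"
  have s2: "(k+1) * (n - k) \<le> X2"
    using sum_mono[of "U - A" "\<lambda>_. k+1" "\<lambda>u. card {v\<in>C. (u, v) \<in> E}"] rowC cUA
    by (simp add: X2_def mult.commute)
  have s3: "k * card D \<le> X3"
    using sum_mono[of D "\<lambda>_. k" "\<lambda>y. card {u\<in>U. (u, y) \<in> E}"] colD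
    by (simp add: X3_def mult.commute)
  have kn: "k * n = k * card C + k * card D"
  proof -
    have "k * n = k * (card C + card D)" by (simp add: cCD)
    also have "\<dots> = k * card C + k * card D" by (simp add: add_mult_distrib2)
    finally show ?thesis .
  qed
  have cE2: "card E = k * card C + X2 + X3" using cE c1 c2 c3 by (simp add: X2_def X3_def)
  have LB: "k*n + (k+1)*(n-k) \<le> card E"
    using cE2 s2 s3 kn by linarith
  moreover have "family_F (k+1) (k+2) n E" if eq: "card E = k*n + (k+1)*(n-k)"
  proof -
    have x2: "X2 = (k+1)*(n-k)" using eq cE2 s2 s3 kn by linarith
    have x3: "X3 = k * card D" using eq cE2 s2 s3 kn by linarith
    have e2: "(\<Sum>u\<in>U - A. card {v\<in>C. (u, v) \<in> E}) \<le> card (U - A) * (k+1)"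
      using x2 cUA by (simp add: X2_def mult.commute)
    have e3: "(\<Sum>y\<in>D. card {u\<in>U. (u, y) \<in> E}) \<le> card D * k"
      using x3 by (simp add: X3_def mult.commute)
    have eqC: "\<forall>u\<in>U - A. card {v\<in>C. (u, v) \<in> E} = k+1"
      using sum_eq_lower[OF _ _ e2] rowC finU by auto
    have eqD: "\<forall>y\<in>D. card {u\<in>U. (u, y) \<in> E} = k"
      using sum_eq_lower[OF _ _ e3] colD finC by auto
    have Dempty: "D = {}"
    proof (rule ccontr)
      assume "D \<noteq> {}"
      then obtain y where yD: "y \<in> D" by blast
      then have yn: "y < n" by (simp add: D_def U_def)
      from yD obtain a where a: "a \<in> A" "(a, y) \<notin> E" by (auto simp: D_def C_def)
      define R where "R = {u\<in>U. (u, y) \<in> E}"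
      have cR: "card R = k" using eqD yD by (simp add: R_def)
      have finR: "finite R" using finU by (simp add: R_def)
      have RU: "R \<subseteq> U" by (auto simp: R_def)
      obtain w where w: "w \<in> R" "w \<notin> A"
      proof (rule ccontr)
        assume "\<not> thesis"
        then have "R \<subseteq> A - {a}" using that a by (auto simp: R_def)
        then have "card R \<le> card (A - {a})" using finA by (intro card_mono) auto
        also have "\<dots> = k - 1" using a cA finA by simp
        finally show False using cR a cA finA by (metis card_gt_0_iff diff_less empty_iff less_le_not_le zero_less_one)
      qed
      obtain u where u: "u \<in> U" "u \<notin> A" "u \<notin> R"
      proof (rule ccontr)
        assume "\<not> thesis"
        then have "U - A \<subseteq> R" using that by auto
        then have "card (U - A) \<le> card R" using finR by (intro card_mono) auto
        then show False using cUA cR n by simp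
      qed
      have un: "u < n" and uy: "(u, y) \<notin> E" using u by (auto simp: U_def R_def)
      obtain P B' where PB: "P \<subseteq> {..<n}" "B' \<subseteq> {..<n}"
        "(card P = k+1 \<and> card B' = k+2) \<or> (card P = k+2 \<and> card B' = k+1)"
        "P \<times> B' \<subseteq> insert (u, y) E"
        by (rule sat_get[OF sat un yn uy])
      have uyPB: "(u, y) \<in> P \<times> B'"
      proof (rule ccontr)
        assume "(u, y) \<notin> P \<times> B'"
        then have "P \<times> B' \<subseteq> E" using PB(4) by blast
        then have "contains_K (k+1) (k+2) n E" using PB unfolding contains_K_def by blast
        then show False using free by simp
      qed
      have finP: "finite P" "finite B'" using PB(1,2) finite_subset by auto
      have PR: "P - {u} \<subseteq> R"
      proof
        fix p assume p: "p \<in> P - {u}"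
        then have "(p, y) \<in> insert (u, y) E" using PB(4) uyPB by blast
        then show "p \<in> R" using p PB(1) by (auto simp: R_def U_def)
      qed
      have "card (P - {u}) \<le> card R" using PR finR by (intro card_mono) auto
      then have cPu: "card P - 1 \<le> k" using uyPB cR finP by simp
      then have cP: "card P = k+1" "card B' = k+2" using PB(3) by auto
      have PReq: "P - {u} = R"
        using PR cP cR finR uyPB finP by (intro card_subset_eq) auto
      have wP: "w \<in> P" using PReq w by auto
      have uP: "u \<in> P" using uyPB by simp
      define Q where "Q = B' - {y}"
      have cQ: "card Q = k+1" using cP uyPB finP by (simp add: Q_def)
      have QU: "Q \<subseteq> U" using PB(2) by (auto simp: Q_def U_def)
      have PQ: "P \<times> Q \<subseteq> E" using PB(4) by (auto simp: Q_def)
      have QC: "Q \<subseteq> C"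
      proof
        fix q assume q: "q \<in> Q"
        show "q \<in> C"
        proof (rule ccontr)
          assume "q \<notin> C"
          then have qD: "q \<in> D" using q QU by (auto simp: D_def)
          have "P \<subseteq> {u\<in>U. (u, q) \<in> E}" using PQ q PB(1) by (auto simp: U_def)
          then have "card P \<le> card {u\<in>U. (u, q) \<in> E}" using finU by (intro card_mono) auto
          then show False using eqD qD cP by simp
        qed
      qed
      define P2 where "P2 = insert u (insert w A)"
      have uw: "u \<noteq> w" using u w by auto
      have cP2: "card P2 = k+2" using uw u w finA cA by (simp add: P2_def)
      have P2U: "P2 \<subseteq> {..<n}" using AU u w RU by (auto simp: P2_def U_def)
      have QU': "Q \<subseteq> {..<n}" using QU by (simp add: U_def)
      have "P2 \<times> Q \<subseteq> E" using QC PQ uP wP by (auto simp: P2_def C_def)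
      then have "contains_K (k+1) (k+2) n E" unfolding contains_K_def
        using P2U QU' cP2 cQ by blast
      then show False using free by simp
    qed
    have CeqU: "C = U" using Dempty CU by (auto simp: D_def)
    show ?thesis unfolding family_F_def
    proof (intro conjI disjI1 exI[of _ A])
      show "bigraph n E" "\<not> contains_K (k+1) (k+2) n E" by fact+
      show "A \<subseteq> {..<n}" using AU by (simp add: U_def)
      show "card A = k + 1 - 1" using cA by simp
      show "\<forall>u\<in>A. \<forall>v<n. (u, v) \<in> E" using CeqU by (auto simp: C_def U_def)
      show "\<forall>u\<in>{..<n} - A. degL E u = k + 2 - 1"
      proof
        fix u assume u: "u \<in> {..<n} - A"
        have "{v. (u, v) \<in> E} = {v\<in>C. (u, v) \<in> E}" using CeqU EU by (auto simp: U_def)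
        then show "degL E u = k + 2 - 1" using eqC u by (simp add: degL_def U_def)
      qed
    qed
  qed
  ultimately show ?thesis by blast
qed


lemma k0_false:
  assumes sat: "K_saturated (0+1) (0+2) n E" and x: "x < n" "degR E x \<le> 0" and n: "3 \<le> n"
  shows False
proof -
  have big: "bigraph n E" and free: "\<not> contains_K (0+1) (0+2) n E"
    using sat by (auto simp: K_saturated_def)
  have lb: "n \<le> card E" using core[OF sat x] n by simp
  have le1: "degR E v \<le> 1" if "v < n" for v
  proof (rule ccontr)
    assume "\<not> degR E v \<le> 1"
    then have "2 \<le> card {u. (u, v) \<in> E}" by (simp add: degR_def)
    then obtain T where T: "T \<subseteq> {u. (u, v) \<in> E}" "card T = 2"
      by (meson obtain_subset_with_card_n)
    have "T \<subseteq> {..<n}" using T NR_sub[OF big] by blast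
    moreover have "T \<times> {v} \<subseteq> E" using T by auto
    ultimately have "contains_K (0+1) (0+2) n E" using T that unfolding contains_K_def
      by (intro exI[of _ T] exI[of _ "{v}"]) auto
    then show False using free by simp
  qed
  have "card E = (\<Sum>v<n. degR E v)" using card_E_degR[OF big] .
  also have "\<dots> = degR E x + (\<Sum>v\<in>{..<n} - {x}. degR E v)"
    using x by (simp add: sum.remove)
  also have "\<dots> \<le> 0 + (\<Sum>v\<in>{..<n} - {x}. 1)"
    using x le1 by (intro add_mono sum_mono) auto
  also have "\<dots> = n - 1" using x by simp
  finally show False using lb n by simp
qed

lemma core_any:
  assumes sat: "K_saturated (k+1) (k+2) n E" and md: "min_degree n E < k+1"
    and n: "2*k+3 \<le> n"
  shows "min_degree n E = k \<and> 0 < k \<and> k*n + (k+1)*(n-k) \<le> card E \<and>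
         (card E = k*n + (k+1)*(n-k) \<longrightarrow> family_F (k+1) (k+2) n E)"
proof -
  let ?S = "(degL E ` {..<n}) \<union> (degR E ` {..<n})"
  have fin: "finite ?S" by simp
  have "0 \<in> {..<n}" using n by simp
  then have ne: "?S \<noteq> {}" by blast
  have mem: "min_degree n E \<in> ?S" unfolding min_degree_def using Min_in[OF fin ne] .
  have ge: "\<forall>d\<in>?S. k \<le> d" using degL_ge[OF sat] degR_ge[OF sat] n by auto
  have "k \<le> min_degree n E" using mem ge by blast
  then have mdk: "min_degree n E = k" using md by linarith
  from mem show ?thesis
  proof
    assume "min_degree n E \<in> degL E ` {..<n}"
    then obtain u where u: "u < n" "degL E u = min_degree n E" by auto
    have sat': "K_saturated (k+1) (k+2) n (flip E)" using sat by simp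
    have d': "degR (flip E) u \<le> k" using u mdk by simp
    have c: "k*n + (k+1)*(n-k) \<le> card E \<and>
         (card E = k*n + (k+1)*(n-k) \<longrightarrow> family_F (k+1) (k+2) n E)"
      using core[OF sat' u(1) d' n] by simp
    have "0 < k"
    proof (rule ccontr)
      assume "\<not> 0 < k"
      then have "k = 0" by simp
      then show False using k0_false[of n "flip E" u] sat' u(1) d' n by simp
    qed
    then show ?thesis using c mdk by simp
  next
    assume "min_degree n E \<in> degR E ` {..<n}"
    then obtain u where u: "u < n" "degR E u = min_degree n E" by auto
    have d': "degR E u \<le> k" using u mdk by simp
    have c: "k*n + (k+1)*(n-k) \<le> card E \<and>
         (card E = k*n + (k+1)*(n-k) \<longrightarrow> family_F (k+1) (k+2) n E)"
      using core[OF sat u(1) d' n] by simp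
    have "0 < k"
    proof (rule ccontr)
      assume "\<not> 0 < k"
      then have "k = 0" by simp
      then show False using k0_false[of n E u] sat u(1) d' n by simp
    qed
    then show ?thesis using c mdk by simp
  qed
qed

lemma F1_card:
  assumes big: "bigraph n E" and S: "S \<subseteq> {..<n}" "card S = k"
    and full: "\<forall>u\<in>S. \<forall>v<n. (u, v) \<in> E" and deg: "\<forall>u\<in>{..<n} - S. degL E u = k+1"
  shows "card E = k*n + (k+1)*(n-k)"
proof -
  have dS: "degL E u = n" if "u \<in> S" for u
  proof -
    have "{v. (u, v) \<in> E} = {..<n}" using full that NL_sub[OF big, of u] by auto
    then show ?thesis by (simp add: degL_def)
  qed
  have "card E = (\<Sum>u<n. degL E u)" using card_E_degL[OF big] .
  also have "\<dots> = (\<Sum>u\<in>{..<n} - S. degL E u) + (\<Sum>u\<in>S. degL E u)"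
    using S by (simp add: sum.subset_diff)
  also have "\<dots> = (\<Sum>u\<in>{..<n} - S. k+1) + (\<Sum>u\<in>S. n)"
    using deg dS by simp
  also have "\<dots> = (n - k) * (k+1) + k * n"
    using S by (simp add: card_Diff_subset finite_subset)
  finally show ?thesis by (simp add: algebra_simps)
qed

lemma F_card:
  assumes "family_F (k+1) (k+2) n E"
  shows "card E = k*n + (k+1)*(n-k)"
proof -
  have big: "bigraph n E" using assms by (simp add: family_F_def)
  from assms consider
    (a) S where "S \<subseteq> {..<n}" "card S = k" "\<forall>u\<in>S. \<forall>v<n. (u, v) \<in> E"
           "\<forall>u\<in>{..<n} - S. degL E u = k+1"
  | (b) S where "S \<subseteq> {..<n}" "card S = k" "\<forall>v\<in>S. \<forall>u<n. (u, v) \<in> E"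
           "\<forall>v\<in>{..<n} - S. degR E v = k+1"
    unfolding family_F_def by auto
  then show ?thesis
  proof cases
    case a then show ?thesis using F1_card[OF big] by blast
  next
    case b
    have "card (flip E) = k*n + (k+1)*(n-k)"
      using b big by (intro F1_card[of n "flip E" S]) auto
    then show ?thesis by simp
  qed
qed


definition NB :: "nat \<Rightarrow> nat \<Rightarrow> nat \<Rightarrow> nat set" where
  "NB k n u = (if u = n - 1 then {2..k+2} else insert (u+1) {1..k})"

definition E0 :: "nat \<Rightarrow> nat \<Rightarrow> (nat \<times> nat) set" where
  "E0 k n = {(u, v). u < k \<and> v < n} \<union> {(u, v). k \<le> u \<and> u < n \<and> v \<in> NB k n u}"

context
  fixes k n :: nat
  assumes k1: "1 \<le> k" and kn: "k + 3 \<le> n"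
begin

lemma NB_sub: "k \<le> u \<Longrightarrow> u < n \<Longrightarrow> NB k n u \<subseteq> {1..<n}"
  using k1 kn by (auto simp: NB_def)

lemma NB_card: "k \<le> u \<Longrightarrow> u < n \<Longrightarrow> card (NB k n u) = k+1"
  by (auto simp: NB_def)

lemma NB_inj: "k \<le> u1 \<Longrightarrow> u1 < n \<Longrightarrow> k \<le> u2 \<Longrightarrow> u2 < n \<Longrightarrow> NB k n u1 = NB k n u2 \<Longrightarrow> u1 = u2"
proof -
  assume a: "k \<le> u1" "u1 < n" "k \<le> u2" "u2 < n" "NB k n u1 = NB k n u2"
  have one: "1 \<in> insert (u+1) {1..k}" for u using k1 by simp
  have notone: "1 \<notin> {2..k+2::nat}" by simp
  show "u1 = u2"
  proof (cases "u1 = n - 1")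
    case True
    show ?thesis
    proof (rule ccontr)
      assume "u1 \<noteq> u2"
      then have "u2 \<noteq> n - 1" using True by simp
      then have "1 \<in> NB k n u2" using k1 by (simp add: NB_def)
      moreover have "1 \<notin> NB k n u1" using True by (simp add: NB_def)
      ultimately show False using a(5) by simp
    qed
  next
    case False
    show ?thesis
    proof (cases "u2 = n - 1")
      case True
      have "1 \<in> NB k n u1" using False k1 by (simp add: NB_def)
      moreover have "1 \<notin> NB k n u2" using True by (simp add: NB_def)
      ultimately show ?thesis using a(5) by simp
    next
      case F2: False
      have "u1 + 1 \<in> NB k n u1" using False by (simp add: NB_def)
      then have "u1 + 1 \<in> NB k n u2" using a(5) by simp
      then have "u1 + 1 \<in> insert (u2+1) {1..k}" using F2 by (simp add: NB_def)
      then have "u1 + 1 = u2 + 1 \<or> u1 + 1 \<le> k" by auto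
      then show ?thesis using a(1) by linarith
    qed
  qed
qed

lemma E0_mem: "(u, v) \<in> E0 k n \<longleftrightarrow> (u < k \<and> v < n) \<or> (k \<le> u \<and> u < n \<and> v \<in> NB k n u)"
  by (simp add: E0_def)

lemma E0_big: "bigraph n (E0 k n)"
  unfolding bigraph_def using NB_sub kn by (fastforce simp: E0_def)

lemma E0_row_hi: "k \<le> u \<Longrightarrow> u < n \<Longrightarrow> {v. (u, v) \<in> E0 k n} = NB k n u"
  by (auto simp: E0_mem)

lemma E0_free: "\<not> contains_K (k+1) (k+2) n (E0 k n)"
proof
  assume "contains_K (k+1) (k+2) n (E0 k n)"
  then obtain P B where PB: "P \<subseteq> {..<n}" "B \<subseteq> {..<n}"
    "(card P = k+1 \<and> card B = k+2) \<or> (card P = k+2 \<and> card B = k+1)" "P \<times> B \<subseteq> E0 k n"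
    unfolding contains_K_def by blast
  have finP: "finite P" "finite B" using PB(1,2) finite_subset by auto
  have BN: "B \<subseteq> NB k n u" if "u \<in> P" "k \<le> u" for u
  proof
    fix v assume "v \<in> B"
    then have "(u, v) \<in> E0 k n" using PB(4) that(1) by blast
    then show "v \<in> NB k n u" using that(2) by (simp add: E0_mem)
  qed
  have cPhi: "card P \<le> k + card (P - {..<k})"
  proof -
    have "card P \<le> card (P \<inter> {..<k}) + card (P - {..<k})"
      using finP by (metis Int_Diff_disjoint Int_Diff_Un card_Un_disjoint finite_Diff finite_Int le_refl)
    also have "card (P \<inter> {..<k}) \<le> k" using card_mono[of "{..<k}" "P \<inter> {..<k}"] by simp
    finally show ?thesis by simp
  qed
  from PB(3) show False
  proof
    assume c: "card P = k+1 \<and> card B = k+2"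
    have "P - {..<k} \<noteq> {}"
    proof
      assume e: "P - {..<k} = {}"
      have "card (P - {..<k}) = 0" by (simp only: e card.empty)
      then show False using cPhi c by linarith
    qed
    then obtain u0 where "u0 \<in> P - {..<k}" by blast
    then have u: "u0 \<in> P" "k \<le> u0" by auto
    then have "card B \<le> card (NB k n u0)" using BN[OF u] by (intro card_mono) (auto simp: NB_def)
    then show False using c NB_card[OF u(2)] u PB(1) by auto
  next
    assume c: "card P = k+2 \<and> card B = k+1"
    then have "2 \<le> card (P - {..<k})" using cPhi by auto
    then obtain T where T: "T \<subseteq> P - {..<k}" "card T = 2" by (meson obtain_subset_with_card_n)
    then obtain u1 u2 where u: "T = {u1, u2}" "u1 \<noteq> u2" by (meson card_2_iff)
    have u1: "u1 \<in> P" "k \<le> u1" "u1 < n" and u2: "u2 \<in> P" "k \<le> u2" "u2 < n"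
      using T u PB(1) by auto
    have "B = NB k n u1"
      using BN[OF u1(1,2)] c NB_card[OF u1(2,3)] by (intro card_subset_eq) (auto simp: NB_def)
    moreover have "B = NB k n u2"
      using BN[OF u2(1,2)] c NB_card[OF u2(2,3)] by (intro card_subset_eq) (auto simp: NB_def)
    ultimately show False using NB_inj[OF u1(2,3) u2(2,3)] u(2) by simp
  qed
qed

lemma E0_sat: "K_saturated (k+1) (k+2) n (E0 k n)"
  unfolding K_saturated_def
proof (intro conjI allI impI)
  show "bigraph n (E0 k n)" by (rule E0_big)
  show "\<not> contains_K (k+1) (k+2) n (E0 k n)" by (rule E0_free)
  fix u v assume u: "u < n" and v: "v < n" and nm: "(u, v) \<notin> E0 k n"
  then have uk: "k \<le> u" and vN: "v \<notin> NB k n u" by (auto simp: E0_mem)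
  let ?P = "insert u {..<k}" and ?B = "insert v (NB k n u)"
  have "card ?P = k+1" using uk by simp
  moreover have "card ?B = k+2" using vN NB_card[OF uk u] by (simp add: NB_def)
  moreover have "?P \<subseteq> {..<n}" using u kn by auto
  moreover have "?B \<subseteq> {..<n}" using v NB_sub[OF uk u] by auto
  moreover have "?P \<times> ?B \<subseteq> insert (u, v) (E0 k n)"
    using NB_sub[OF uk u] u v by (auto simp: E0_mem)
  ultimately show "contains_K (k+1) (k+2) n (insert (u, v) (E0 k n))"
    unfolding contains_K_def by blast
qed

lemma E0_mindeg: "min_degree n (E0 k n) = k"
  unfolding min_degree_def
proof (rule Min_eqI)
  show "finite (degL (E0 k n) ` {..<n} \<union> degR (E0 k n) ` {..<n})" by simp
  have "{u. (u, 0) \<in> E0 k n} = {..<k}"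
    using kn NB_sub by (fastforce simp: E0_mem)
  then have "degR (E0 k n) 0 = k" by (simp add: degR_def)
  then show "k \<in> degL (E0 k n) ` {..<n} \<union> degR (E0 k n) ` {..<n}" using kn by force
  fix d assume "d \<in> degL (E0 k n) ` {..<n} \<union> degR (E0 k n) ` {..<n}"
  then show "k \<le> d"
  proof
    assume "d \<in> degL (E0 k n) ` {..<n}"
    then obtain u where u: "u < n" "d = degL (E0 k n) u" by auto
    show "k \<le> d"
    proof (cases "u < k")
      case True
      then have "{v. (u, v) \<in> E0 k n} = {..<n}" by (auto simp: E0_mem)
      then show ?thesis using u kn by (simp add: degL_def)
    next
      case False
      then show ?thesis using u NB_card[of u] E0_row_hi[of u] by (simp add: degL_def)
    qed
  next
    assume "d \<in> degR (E0 k n) ` {..<n}"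
    then obtain v where v: "v < n" "d = degR (E0 k n) v" by auto
    have "{..<k} \<subseteq> {u. (u, v) \<in> E0 k n}" using v by (auto simp: E0_mem)
    moreover have "finite {u. (u, v) \<in> E0 k n}" using NR_sub[OF E0_big] finite_subset by blast
    ultimately show "k \<le> d" using v card_mono[of "{u. (u, v) \<in> E0 k n}" "{..<k}"] by (simp add: degR_def)
  qed
qed

lemma E0_F: "family_F (k+1) (k+2) n (E0 k n)"
  unfolding family_F_def
proof (intro conjI disjI1 exI[of _ "{..<k}"])
  show "bigraph n (E0 k n)" by (rule E0_big)
  show "\<not> contains_K (k+1) (k+2) n (E0 k n)" by (rule E0_free)
  show "{..<k} \<subseteq> {..<n}" using kn by auto
  show "card {..<k} = k + 1 - 1" by simp
  show "\<forall>u\<in>{..<k}. \<forall>v<n. (u, v) \<in> E0 k n" by (simp add: E0_mem)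
  show "\<forall>u\<in>{..<n} - {..<k}. degL (E0 k n) u = k + 2 - 1"
    using NB_card E0_row_hi by (simp add: degL_def)
qed

lemma E0_card: "card (E0 k n) = k*n + (k+1)*(n-k)"
  using F_card[OF E0_F] .

end

lemma main_k:
  "\<exists>N. \<forall>n\<ge>N. \<forall>E. K_saturated (k+1) (k+2) n E \<and> min_degree n E < k+1 \<longrightarrow>
     ((\<forall>E'. K_saturated (k+1) (k+2) n E' \<and> min_degree n E' < k+1 \<longrightarrow> card E \<le> card E')
      \<longleftrightarrow> (family_F (k+1) (k+2) n E \<and> min_degree n E = k))"
proof (intro exI[of _ "2*k+3"] allI impI)
  fix n E assume n: "2*k+3 \<le> n" and h: "K_saturated (k+1) (k+2) n E \<and> min_degree n E < k+1"
  have ca: "min_degree n E = k \<and> 0 < k \<and> k*n + (k+1)*(n-k) \<le> card E \<and>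
         (card E = k*n + (k+1)*(n-k) \<longrightarrow> family_F (k+1) (k+2) n E)"
    using core_any[OF h[THEN conjunct1] h[THEN conjunct2] n] .
  show "(\<forall>E'. K_saturated (k+1) (k+2) n E' \<and> min_degree n E' < k+1 \<longrightarrow> card E \<le> card E')
      \<longleftrightarrow> (family_F (k+1) (k+2) n E \<and> min_degree n E = k)"
  proof
    assume mn: "\<forall>E'. K_saturated (k+1) (k+2) n E' \<and> min_degree n E' < k+1 \<longrightarrow> card E \<le> card E'"
    have k1: "1 \<le> k" and kn: "k+3 \<le> n" using ca n by auto
    have "card E \<le> card (E0 k n)"
      using mn[rule_format, of "E0 k n"] E0_sat[OF k1 kn] E0_mindeg[OF k1 kn] by simp
    then have "card E = k*n + (k+1)*(n-k)" using ca E0_card[OF k1 kn] by simp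
    then show "family_F (k+1) (k+2) n E \<and> min_degree n E = k" using ca by simp
  next
    assume "family_F (k+1) (k+2) n E \<and> min_degree n E = k"
    then have cE: "card E = k*n + (k+1)*(n-k)" using F_card by blast
    show "\<forall>E'. K_saturated (k+1) (k+2) n E' \<and> min_degree n E' < k+1 \<longrightarrow> card E \<le> card E'"
    proof (intro allI impI)
      fix E' assume "K_saturated (k+1) (k+2) n E' \<and> min_degree n E' < k+1"
      then have "k*n + (k+1)*(n-k) \<le> card E'" using core_any[of k n E'] n by blast
      then show "card E \<le> card E'" using cE by simp
    qed
  qed
qed

theorem proposition2p2:
  fixes t :: nat
  assumes "t > 1"
  shows "\<exists>N. \<forall>n\<ge>N. \<forall>E. K_saturated (t - 1) t n E \<and> min_degree n E < t - 1 \<longrightarrow>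
           ((\<forall>E'. K_saturated (t - 1) t n E' \<and> min_degree n E' < t - 1 \<longrightarrow> card E \<le> card E')
            \<longleftrightarrow> (family_F (t - 1) t n E \<and> min_degree n E = t - 2))"
proof -
  define k where "k = t - 2"
  have t: "t = k + 2" using assms by (simp add: k_def)
  have "t - 1 = k + 1" "t - 2 = k" using t by auto
  then show ?thesis using main_k[of k] t by simp
qed

end
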